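(* Let $\sigma>0$, $p\in(0,1)$ and $\delta\in(0,1)$. Let $\pi_0(z)=\sigma^{-2}z\,e^{-z^2/(2\sigma^2)}$ and $\pi_\delta(z)=\sigma^{-2}\delta^{-2}z\,e^{-z^2/(2\sigma^2\delta^2)}$ for $z\ge0$ (the densities of $\beta$ and $\delta\beta$ for $\beta\sim\mathrm{Rayleigh}(\sigma)$). Define $$G(\delta,\lambda)=\lambda p-\int_0^\infty\big(\lambda\pi_0(z)-\pi_\delta(z)\big)_+\,dz,\qquad (s)_+=\max\{0,s\}.$$ Then $\lambda\mapsto G(\delta,\lambda)$ attains its maximum over $\lambda\ge0$ at $\lambda_\delta=\delta^{-2}p^{(1-\delta^2)/\delta^2}$, and $$\max_{\lambda\ge0}G(\delta,\lambda)=p^{\delta^{-2}}.$$ Consequently, for $\gamma_1\in(0,1)$, $\min_{\delta\in[\gamma_1,1)}\max_{\lambda\ge0}G(\delta,\lambda)=p^{\gamma_1^{-2}}$ (as an infimum over $[\gamma_1,1)$), and $p^{\gamma_1^{-2}}>\tfrac12$ if and only if $\gamma_1>\sqrt{\log p/\log\tfrac12}$.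
   Context: A random variable $\zeta$ has the Rayleigh distribution with scale $\sigma>0$, written $\zeta\sim\mathrm{Rayleigh}(\sigma)$, if it has density $p_\zeta(z)=\sigma^{-2}z\,e^{-z^2/(2\sigma^2)}$ for $z\ge 0$ (and $0$ for $z<0$). *)

theory Defs
  imports "HOL-Analysis.Analysis"
begin

definition pi0 :: "real \<Rightarrow> real \<Rightarrow> real" where
  "pi0 \<sigma> z = z / \<sigma>\<^sup>2 * exp (- z\<^sup>2 / (2 * \<sigma>\<^sup>2))"

definition pi_delta :: "real \<Rightarrow> real \<Rightarrow> real \<Rightarrow> real" where
  "pi_delta \<sigma> \<delta> z = z / (\<sigma>\<^sup>2 * \<delta>\<^sup>2) * exp (- z\<^sup>2 / (2 * \<sigma>\<^sup>2 * \<delta>\<^sup>2))"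

definition G :: "real \<Rightarrow> real \<Rightarrow> real \<Rightarrow> real \<Rightarrow> real" where
  "G \<sigma> p \<delta> lam = lam * p - (LINT z:{0..}|lborel. max 0 (lam * pi0 \<sigma> z - pi_delta \<sigma> \<delta> z))"

end

theory Submission
  imports Defs "HOL-Real_Asymp.Real_Asymp"
begin


lemma bern_powr:
  fixes x s :: real assumes "x > 0" "s \<ge> 1"
  shows "x powr s \<ge> 1 + s * (x - 1)"
proof -
  have "(\<lambda>x. x powr s) x - (\<lambda>x. x powr s) 1 \<ge> s * (x - 1)"
    apply (rule convex_on_imp_above_tangent[where A="{0<..}"])
    using assms by (auto simp: interior_open intro!: powr_convex derivative_eq_intros)
  thus ?thesis by simp
qed

lemma lim1:
  fixes b :: real assumes "b > 0"
  shows "((\<lambda>z. exp (- z\<^sup>2 / b)) \<longlongrightarrow> 0) at_top"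
  using assms by real_asymp

lemma lim0:
  fixes a b lam :: real assumes "a > 0" "b > 0"
  shows "((\<lambda>z. exp (- z\<^sup>2 / b) - lam * exp (- z\<^sup>2 / a)) \<longlongrightarrow> 0) at_top"
  using tendsto_diff[OF lim1[OF assms(2)] tendsto_mult[OF tendsto_const lim1[OF assms(1)]]] by simp



lemma int_key:
  fixes \<sigma> \<delta> lam z0 :: real
  assumes s: "\<sigma> > 0" and d: "\<delta> > 0" and z0: "z0 \<ge> 0"
    and neg: "\<And>z. 0 \<le> z \<Longrightarrow> z \<le> z0 \<Longrightarrow> lam * pi0 \<sigma> z - pi_delta \<sigma> \<delta> z \<le> 0"
    and pos: "\<And>z. z0 \<le> z \<Longrightarrow> lam * pi0 \<sigma> z - pi_delta \<sigma> \<delta> z \<ge> 0"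
  shows "(LINT z:{0..}|lborel. max 0 (lam * pi0 \<sigma> z - pi_delta \<sigma> \<delta> z))
     = lam * exp (- z0\<^sup>2 / (2 * \<sigma>\<^sup>2)) - exp (- z0\<^sup>2 / (2 * \<sigma>\<^sup>2 * \<delta>\<^sup>2))"
proof -
  define f where "f = (\<lambda>z. lam * pi0 \<sigma> z - pi_delta \<sigma> \<delta> z)"
  define F where "F = (\<lambda>z. exp (- z\<^sup>2 / (2 * \<sigma>\<^sup>2 * \<delta>\<^sup>2)) - lam * exp (- z\<^sup>2 / (2 * \<sigma>\<^sup>2)))"
  have D: "DERIV F x :> f x" for x
    unfolding F_def f_def pi0_def pi_delta_def
    using s d by (auto intro!: derivative_eq_intros simp: field_simps power2_eq_square)
  have lim: "(F \<longlongrightarrow> 0) at_top"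
    unfolding F_def by (rule lim0) (use s d in auto)
  have fmeas: "f \<in> borel_measurable borel"
    unfolding f_def pi0_def pi_delta_def by measurable
  have Fmono: "F x \<le> F y" if "z0 \<le> x" "x \<le> y" for x y
  proof (rule DERIV_nonneg_imp_nondecreasing[of x y F])
    show "x \<le> y" by fact
    fix t assume "x \<le> t" "t \<le> y"
    hence "z0 \<le> t" using that by auto
    thus "\<exists>y. DERIV F t :> y \<and> 0 \<le> y" using D[of t] pos[of t] \<open>z0 \<le> t\<close> unfolding f_def by auto
  qed
  have Fle: "F z0 \<le> 0"
    by (rule tendsto_lowerbound[OF lim]) (auto simp: eventually_at_top_linorder intro!: exI[of _ z0] Fmono)
  have nn: "(\<integral>\<^sup>+x. ennreal (f x) * indicator {z0..} x \<partial>lborel) = ennreal (0 - F z0)"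
    by (rule nn_integral_FTC_atLeast[OF fmeas D _ lim]) (use pos in \<open>auto simp: f_def\<close>)
  have "has_bochner_integral lborel (\<lambda>z. indicator {0..} z *\<^sub>R max 0 (f z)) (0 - F z0)"
  proof (rule has_bochner_integral_nn_integral)
    show "(\<lambda>z. indicator {0..} z *\<^sub>R max 0 (f z)) \<in> borel_measurable lborel"
      using fmeas by measurable
    show "AE x in lborel. 0 \<le> indicator {0..} x *\<^sub>R max 0 (f x)" by auto
    show "0 \<le> 0 - F z0" using Fle by simp
    have "(\<integral>\<^sup>+x. ennreal (indicator {0..} x *\<^sub>R max 0 (f x)) \<partial>lborel)
        = (\<integral>\<^sup>+x. ennreal (f x) * indicator {z0..} x \<partial>lborel)"
    proof (rule nn_integral_cong)
      fix x :: real
      show "ennreal (indicator {0..} x *\<^sub>R max 0 (f x)) = ennreal (f x) * indicator {z0..} x"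
      proof (cases "x < 0")
        case True thus ?thesis using z0 by (simp add: indicator_def)
      next
        case False
        show ?thesis
        proof (cases "x \<le> z0")
          case True
          hence "f x \<le> 0" using neg False unfolding f_def by auto
          moreover have "x < z0 \<or> x = z0" using True by auto
          moreover have "x = z0 \<Longrightarrow> f x = 0" using pos[of z0] neg[of z0] z0 unfolding f_def by auto
          ultimately show ?thesis using False by (auto simp: indicator_def max_def)
        next
          case False2: False
          hence "f x \<ge> 0" using pos unfolding f_def by auto
          thus ?thesis using False False2 by (simp add: indicator_def)
        qed
      qed
    qed
    thus "(\<integral>\<^sup>+x. ennreal (indicator {0..} x *\<^sub>R max 0 (f x)) \<partial>lborel) = ennreal (0 - F z0)"
      using nn by simp
  qed
  hence "(LINT z:{0..}|lborel. max 0 (f z)) = 0 - F z0"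
    unfolding set_lebesgue_integral_def by (rule has_bochner_integral_integral_eq)
  thus ?thesis unfolding f_def F_def by simp
qed



lemma fact_form:
  fixes \<sigma> \<delta> lam z :: real
  assumes s: "\<sigma> > 0" and d: "\<delta> > 0"
  shows "lam * pi0 \<sigma> z - pi_delta \<sigma> \<delta> z
     = z / \<sigma>\<^sup>2 * exp (- z\<^sup>2 / (2 * \<sigma>\<^sup>2)) * (lam - exp (- ((1 - \<delta>\<^sup>2) / (2 * \<sigma>\<^sup>2 * \<delta>\<^sup>2)) * z\<^sup>2) / \<delta>\<^sup>2)"
proof -
  have "exp (- z\<^sup>2 / (2 * \<sigma>\<^sup>2 * \<delta>\<^sup>2)) = exp (- z\<^sup>2 / (2 * \<sigma>\<^sup>2)) * exp (- ((1 - \<delta>\<^sup>2) / (2 * \<sigma>\<^sup>2 * \<delta>\<^sup>2)) * z\<^sup>2)"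
    unfolding exp_add[symmetric] using s d by (simp add: field_simps)
  thus ?thesis unfolding pi0_def pi_delta_def using s d by (simp add: field_simps)
qed

lemma sign_le:
  fixes \<sigma> \<delta> lam z :: real
  assumes s: "\<sigma> > 0" and d: "\<delta> > 0" and z: "z \<ge> 0"
    and h: "lam * \<delta>\<^sup>2 \<le> exp (- ((1 - \<delta>\<^sup>2) / (2 * \<sigma>\<^sup>2 * \<delta>\<^sup>2)) * z\<^sup>2)"
  shows "lam * pi0 \<sigma> z - pi_delta \<sigma> \<delta> z \<le> 0"
proof -
  have "lam - exp (- ((1 - \<delta>\<^sup>2) / (2 * \<sigma>\<^sup>2 * \<delta>\<^sup>2)) * z\<^sup>2) / \<delta>\<^sup>2 \<le> 0"
    using h d by (simp add: field_simps)
  moreover have "z / \<sigma>\<^sup>2 * exp (- z\<^sup>2 / (2 * \<sigma>\<^sup>2)) \<ge> 0" using z by simp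
  ultimately show ?thesis unfolding fact_form[OF s d] by (metis mult_nonneg_nonpos)
qed

lemma sign_ge:
  fixes \<sigma> \<delta> lam z :: real
  assumes s: "\<sigma> > 0" and d: "\<delta> > 0" and z: "z \<ge> 0"
    and h: "lam * \<delta>\<^sup>2 \<ge> exp (- ((1 - \<delta>\<^sup>2) / (2 * \<sigma>\<^sup>2 * \<delta>\<^sup>2)) * z\<^sup>2)"
  shows "lam * pi0 \<sigma> z - pi_delta \<sigma> \<delta> z \<ge> 0"
proof -
  have "lam - exp (- ((1 - \<delta>\<^sup>2) / (2 * \<sigma>\<^sup>2 * \<delta>\<^sup>2)) * z\<^sup>2) / \<delta>\<^sup>2 \<ge> 0"
    using h d by (simp add: field_simps)
  moreover have "z / \<sigma>\<^sup>2 * exp (- z\<^sup>2 / (2 * \<sigma>\<^sup>2)) \<ge> 0" using z by simp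
  ultimately show ?thesis unfolding fact_form[OF s d] by (metis mult_nonneg_nonneg)
qed

lemma G_zero:
  assumes s: "\<sigma> > 0" and d: "\<delta> > 0"
  shows "G \<sigma> p \<delta> 0 = 0"
proof -
  have "(\<lambda>z. indicator {0..} z *\<^sub>R max 0 (0 * pi0 \<sigma> z - pi_delta \<sigma> \<delta> z)) = (\<lambda>z. 0::real)"
  proof
    fix z :: real
    show "indicator {0..} z *\<^sub>R max 0 (0 * pi0 \<sigma> z - pi_delta \<sigma> \<delta> z) = 0"
      using s d by (cases "z \<ge> 0") (auto simp: pi_delta_def indicator_def)
  qed
  thus ?thesis unfolding G_def set_lebesgue_integral_def by simp
qed

lemma G_big:
  assumes s: "\<sigma> > 0" and d: "\<delta> > 0" "\<delta> < 1" and h: "lam * \<delta>\<^sup>2 \<ge> 1"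
  shows "G \<sigma> p \<delta> lam = lam * p - lam + 1"
proof -
  have c: "(1 - \<delta>\<^sup>2) / (2 * \<sigma>\<^sup>2 * \<delta>\<^sup>2) \<ge> 0" using s d by (simp add: power_le_one)
  have "(LINT z:{0..}|lborel. max 0 (lam * pi0 \<sigma> z - pi_delta \<sigma> \<delta> z))
     = lam * exp (- 0\<^sup>2 / (2 * \<sigma>\<^sup>2)) - exp (- 0\<^sup>2 / (2 * \<sigma>\<^sup>2 * \<delta>\<^sup>2))"
  proof (rule int_key[OF s d(1)])
    fix z :: real assume "0 \<le> z" "z \<le> 0"
    hence "z = 0" by simp
    thus "lam * pi0 \<sigma> z - pi_delta \<sigma> \<delta> z \<le> 0" by (simp add: pi0_def pi_delta_def)
  next
    fix z :: real assume z: "0 \<le> z"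
    have "exp (- ((1 - \<delta>\<^sup>2) / (2 * \<sigma>\<^sup>2 * \<delta>\<^sup>2)) * z\<^sup>2) \<le> 1"
    proof -
      have "0 \<le> (1 - \<delta>\<^sup>2) / (2 * \<sigma>\<^sup>2 * \<delta>\<^sup>2) * z\<^sup>2" by (rule mult_nonneg_nonneg[OF c]) simp
      thus ?thesis by simp
    qed
    thus "lam * pi0 \<sigma> z - pi_delta \<sigma> \<delta> z \<ge> 0" using h by (intro sign_ge[OF s d(1) z]) linarith
  qed simp
  thus ?thesis unfolding G_def by simp
qed

lemma G_small:
  assumes s: "\<sigma> > 0" and d: "\<delta> > 0" "\<delta> < 1" and l: "lam > 0" and h: "lam * \<delta>\<^sup>2 < 1"
  shows "G \<sigma> p \<delta> lam = lam * p - lam * (lam * \<delta>\<^sup>2) powr (\<delta>\<^sup>2 / (1 - \<delta>\<^sup>2))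
            + (lam * \<delta>\<^sup>2) powr (1 / (1 - \<delta>\<^sup>2))"
proof -
  define t where "t = lam * \<delta>\<^sup>2"
  define c where "c = (1 - \<delta>\<^sup>2) / (2 * \<sigma>\<^sup>2 * \<delta>\<^sup>2)"
  have d2: "\<delta>\<^sup>2 < 1" using d by (simp add: power_less_one_iff)
  have c: "c > 0" unfolding c_def using s d d2 by simp
  have t: "t > 0" "t < 1" using l d h unfolding t_def by auto
  have lnt: "ln t < 0" using t by simp
  define z0 where "z0 = sqrt (- ln t / c)"
  have q: "0 \<le> - ln t / c" by (rule divide_nonneg_pos) (use lnt c in auto)
  have z0: "z0 \<ge> 0" unfolding z0_def using q by simp
  have z0sq: "z0\<^sup>2 = - ln t / c" unfolding z0_def using real_sqrt_pow2[OF q] .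
  have "(LINT z:{0..}|lborel. max 0 (lam * pi0 \<sigma> z - pi_delta \<sigma> \<delta> z))
     = lam * exp (- z0\<^sup>2 / (2 * \<sigma>\<^sup>2)) - exp (- z0\<^sup>2 / (2 * \<sigma>\<^sup>2 * \<delta>\<^sup>2))"
  proof (rule int_key[OF s d(1) z0])
    fix z :: real assume z: "0 \<le> z" "z \<le> z0"
    hence "z\<^sup>2 \<le> z0\<^sup>2" by (simp add: power_mono)
    hence "c * z\<^sup>2 \<le> - ln t" using z0sq c by (simp add: field_simps)
    hence "exp (ln t) \<le> exp (- c * z\<^sup>2)" by simp
    hence "t \<le> exp (- c * z\<^sup>2)" using t by simp
    thus "lam * pi0 \<sigma> z - pi_delta \<sigma> \<delta> z \<le> 0"
      by (intro sign_le[OF s d(1) z(1)]) (simp add: t_def c_def)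
  next
    fix z :: real assume z: "z0 \<le> z"
    hence "z0\<^sup>2 \<le> z\<^sup>2" using z0 by (simp add: power_mono)
    hence "c * z\<^sup>2 \<ge> - ln t" using z0sq c by (simp add: field_simps)
    hence "exp (ln t) \<ge> exp (- c * z\<^sup>2)" by simp
    hence "t \<ge> exp (- c * z\<^sup>2)" using t by simp
    thus "lam * pi0 \<sigma> z - pi_delta \<sigma> \<delta> z \<ge> 0"
      using z z0 by (intro sign_ge[OF s d(1)]) (auto simp: t_def c_def)
  qed
  moreover have "exp (- z0\<^sup>2 / (2 * \<sigma>\<^sup>2)) = t powr (\<delta>\<^sup>2 / (1 - \<delta>\<^sup>2))"
  proof -
    have "- z0\<^sup>2 / (2 * \<sigma>\<^sup>2) = \<delta>\<^sup>2 / (1 - \<delta>\<^sup>2) * ln t"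
      unfolding z0sq c_def using s d d2 by (simp add: field_simps)
    thus ?thesis using t by (simp add: powr_def)
  qed
  moreover have "exp (- z0\<^sup>2 / (2 * \<sigma>\<^sup>2 * \<delta>\<^sup>2)) = t powr (1 / (1 - \<delta>\<^sup>2))"
  proof -
    have e: "c * (2 * \<sigma>\<^sup>2 * \<delta>\<^sup>2) = 1 - \<delta>\<^sup>2" unfolding c_def using s d by simp
    have "- z0\<^sup>2 / (2 * \<sigma>\<^sup>2 * \<delta>\<^sup>2) = ln t / (c * (2 * \<sigma>\<^sup>2 * \<delta>\<^sup>2))"
      unfolding z0sq using s d c by (simp add: field_simps)
    also have "\<dots> = 1 / (1 - \<delta>\<^sup>2) * ln t" unfolding e by simp
    finally have "- z0\<^sup>2 / (2 * \<sigma>\<^sup>2 * \<delta>\<^sup>2) = 1 / (1 - \<delta>\<^sup>2) * ln t" .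
    thus ?thesis using t by (simp add: powr_def)
  qed
  ultimately show ?thesis unfolding G_def t_def by simp
qed



lemma bound_small:
  fixes d2 p t :: real
  assumes d2: "0 < d2" "d2 < 1" and p: "0 < p" "p < 1" and t: "t > 0"
  shows "t / d2 * p - t / d2 * t powr (d2 / (1 - d2)) + t powr (1 / (1 - d2)) \<le> p powr (1 / d2)"
    and "t = p powr ((1 - d2) / d2) \<Longrightarrow>
         t / d2 * p - t / d2 * t powr (d2 / (1 - d2)) + t powr (1 / (1 - d2)) = p powr (1 / d2)"
proof -
  define s where "s = 1 / (1 - d2)"
  define P where "P = p powr (1 / d2)"
  define ts where "ts = p powr ((1 - d2) / d2)"
  have s1: "s \<ge> 1" unfolding s_def using d2 by simp
  have ts: "ts > 0" unfolding ts_def using p by simp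
  have P: "P > 0" unfolding P_def using p by simp
  have e1: "t * t powr (d2 / (1 - d2)) = t powr s"
  proof -
    have "t * t powr (d2 / (1 - d2)) = t powr (1 + d2 / (1 - d2))" using t by (simp add: powr_add)
    also have "1 + d2 / (1 - d2) = s" unfolding s_def using d2 by (simp add: field_simps)
    finally show ?thesis .
  qed
  have e2: "ts powr s = P" unfolding ts_def P_def s_def using d2 by (simp add: powr_powr)
  have e3: "p * ts = P"
  proof -
    have "p * ts = p powr (1 + (1 - d2) / d2)" unfolding ts_def using p by (simp add: powr_add)
    also have "1 + (1 - d2) / d2 = 1 / d2" using d2 by (simp add: field_simps)
    finally show ?thesis unfolding P_def .
  qed
  have expr: "t / d2 * p - t / d2 * t powr (d2 / (1 - d2)) + t powr (1 / (1 - d2))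
      = t * p / d2 - (1 - d2) / d2 * t powr s"
    using e1 d2 unfolding s_def[symmetric] by (simp add: field_simps)
  have b: "(t / ts) powr s \<ge> 1 + s * (t / ts - 1)" using bern_powr[of "t / ts" s] t ts s1 by simp
  hence "t powr s / P \<ge> 1 + s * (t / ts - 1)" using t ts by (simp add: powr_divide e2)
  hence "t powr s \<ge> P * (1 + s * (t / ts - 1))" using P by (simp add: field_simps)
  also have "P * (1 + s * (t / ts - 1)) = P + s * (t * p - P)"
    using ts e3[symmetric] by (simp add: field_simps)
  finally have T: "t powr s \<ge> P + s * (t * p - P)" .
  have k: "(1 - d2) / d2 * s = 1 / d2" unfolding s_def using d2 by simp
  have "(1 - d2) / d2 * t powr s \<ge> (1 - d2) / d2 * (P + s * (t * p - P))"
    using T d2 by (intro mult_left_mono) auto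
  also have "(1 - d2) / d2 * (P + s * (t * p - P)) = (1 - d2) / d2 * P + ((1 - d2) / d2 * s) * (t * p - P)"
    by (simp only: distrib_left mult.assoc)
  also have "\<dots> = (1 - d2) / d2 * P + (t * p - P) / d2" unfolding k by simp
  finally have "(1 - d2) / d2 * t powr s \<ge> (1 - d2) / d2 * P + (t * p - P) / d2" .
  hence "t * p / d2 - (1 - d2) / d2 * t powr s \<le> t * p / d2 - ((1 - d2) / d2 * P + (t * p - P) / d2)" by linarith
  also have "t * p / d2 - ((1 - d2) / d2 * P + (t * p - P) / d2) = P" using d2 by (simp add: field_simps)
  finally have "t * p / d2 - (1 - d2) / d2 * t powr s \<le> P" .
  thus "t / d2 * p - t / d2 * t powr (d2 / (1 - d2)) + t powr (1 / (1 - d2)) \<le> p powr (1 / d2)"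
    using expr unfolding P_def by simp
  assume tt: "t = p powr ((1 - d2) / d2)"
  have "t powr s = P" using tt e2 unfolding ts_def by simp
  moreover have "t * p = P" using tt e3 unfolding ts_def by (simp add: mult.commute)
  ultimately have "t * p / d2 - (1 - d2) / d2 * t powr s = P" using d2 by (simp add: field_simps)
  thus "t / d2 * p - t / d2 * t powr (d2 / (1 - d2)) + t powr (1 / (1 - d2)) = p powr (1 / d2)"
    using expr unfolding P_def by simp
qed



lemma part1:
  fixes \<sigma> p \<delta> :: real
  assumes s: "\<sigma> > 0" and p: "0 < p" "p < 1" and d: "0 < \<delta>" "\<delta> < 1"
  shows "(\<forall>lam\<ge>0. G \<sigma> p \<delta> lam \<le> p powr (1 / \<delta>\<^sup>2))"
    and "G \<sigma> p \<delta> (p powr ((1 - \<delta>\<^sup>2) / \<delta>\<^sup>2) / \<delta>\<^sup>2) = p powr (1 / \<delta>\<^sup>2)"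
proof -
  define d2 where "d2 = \<delta>\<^sup>2"
  have d2: "0 < d2" "d2 < 1" unfolding d2_def using d by (auto simp: power_less_one_iff)
  have P: "p powr (1 / d2) > 0" using p by simp
  show "\<forall>lam\<ge>0. G \<sigma> p \<delta> lam \<le> p powr (1 / \<delta>\<^sup>2)"
  proof (intro allI impI)
    fix lam :: real assume l: "lam \<ge> 0"
    consider "lam = 0" | "lam > 0" "lam * d2 < 1" | "lam * d2 \<ge> 1" using l by force
    thus "G \<sigma> p \<delta> lam \<le> p powr (1 / \<delta>\<^sup>2)"
    proof cases
      case 1 thus ?thesis using G_zero[OF s d(1)] P unfolding d2_def by simp
    next
      case 2
      define t where "t = lam * d2"
      have t: "t > 0" unfolding t_def using 2 d2 by simp
      have lam: "lam = t / d2" unfolding t_def using d2 by simp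
      have "G \<sigma> p \<delta> lam = lam * p - lam * t powr (d2 / (1 - d2)) + t powr (1 / (1 - d2))"
        using G_small[OF s d 2[unfolded d2_def]] unfolding t_def d2_def by simp
      also have "\<dots> = t / d2 * p - t / d2 * t powr (d2 / (1 - d2)) + t powr (1 / (1 - d2))"
        by (simp only: lam)
      also have "\<dots> \<le> p powr (1 / d2)" by (rule bound_small(1)[OF d2 p t])
      finally show ?thesis unfolding d2_def .
    next
      case 3
      have "G \<sigma> p \<delta> lam = 1 - lam * (1 - p)" using G_big[OF s d 3[unfolded d2_def]] by (simp add: algebra_simps)
      also have "\<dots> \<le> 1 - (1 / d2) * (1 - p)"
      proof -
        have "1 / d2 \<le> lam" using 3 d2 by (simp add: field_simps)
        hence "1 / d2 * (1 - p) \<le> lam * (1 - p)" by (rule mult_right_mono) (use p in simp)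
        thus ?thesis by linarith
      qed
      also have "\<dots> \<le> p powr (1 / d2)"
      proof -
        have b: "1 + (1 / d2) * (p - 1) \<le> p powr (1 / d2)" by (rule bern_powr) (use p d2 in auto)
        have "(1 / d2) * (p - 1) = - ((1 / d2) * (1 - p))" using d2 by (simp add: field_simps)
        thus ?thesis using b by linarith
      qed
      finally show ?thesis unfolding d2_def .
    qed
  qed
  define t where "t = p powr ((1 - d2) / d2)"
  have t: "t > 0" unfolding t_def using p by simp
  have t1: "t < 1"
  proof -
    have "p powr ((1 - d2) / d2) < p powr 0" using d2 p by (intro powr_less_mono') auto
    thus ?thesis unfolding t_def using p by simp
  qed
  define lam where "lam = t / d2"
  have lt: "lam * d2 = t" unfolding lam_def using d2 by simp
  have "G \<sigma> p \<delta> lam = lam * p - lam * t powr (d2 / (1 - d2)) + t powr (1 / (1 - d2))"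
    using G_small[of \<sigma> \<delta> lam p] s d t t1 d2 lt unfolding lam_def d2_def by simp
  also have "\<dots> = p powr (1 / d2)" unfolding lam_def by (rule bound_small(2)[OF d2 p t t_def])
  finally show "G \<sigma> p \<delta> (p powr ((1 - \<delta>\<^sup>2) / \<delta>\<^sup>2) / \<delta>\<^sup>2) = p powr (1 / \<delta>\<^sup>2)"
    unfolding lam_def t_def d2_def .
qed

lemma sup_val:
  fixes \<sigma> p \<delta> :: real
  assumes s: "\<sigma> > 0" and p: "0 < p" "p < 1" and d: "0 < \<delta>" "\<delta> < 1"
  shows "(SUP lam\<in>{0..}. G \<sigma> p \<delta> lam) = p powr (1 / \<delta>\<^sup>2)"
proof (rule cSup_eq_maximum)
  have "p powr ((1 - \<delta>\<^sup>2) / \<delta>\<^sup>2) / \<delta>\<^sup>2 \<in> {0..}" by simp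
  thus "p powr (1 / \<delta>\<^sup>2) \<in> (\<lambda>lam. G \<sigma> p \<delta> lam) ` {0..}"
    using part1(2)[OF s p d] by (metis image_eqI)
  show "x \<le> p powr (1 / \<delta>\<^sup>2)" if "x \<in> (\<lambda>lam. G \<sigma> p \<delta> lam) ` {0..}" for x
    using that part1(1)[OF s p d] by auto
qed

theorem mainTheorem6:
  fixes \<sigma> p :: real
  assumes "\<sigma> > 0" and "0 < p" and "p < 1"
  shows "(\<forall>\<delta>\<in>{0<..<1::real}.
            let lamd = p powr ((1 - \<delta>\<^sup>2) / \<delta>\<^sup>2) / \<delta>\<^sup>2 in
              lamd \<ge> 0
            \<and> (\<forall>lam\<ge>0. G \<sigma> p \<delta> lam \<le> G \<sigma> p \<delta> lamd)
            \<and> (SUP lam\<in>{0..}. G \<sigma> p \<delta> lam) = p powr (1 / \<delta>\<^sup>2)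
            \<and> G \<sigma> p \<delta> lamd = p powr (1 / \<delta>\<^sup>2))
       \<and> (\<forall>\<gamma>\<^sub>1\<in>{0<..<1::real}.
            (INF \<delta>\<in>{\<gamma>\<^sub>1..<1}. SUP lam\<in>{0..}. G \<sigma> p \<delta> lam) = p powr (1 / \<gamma>\<^sub>1\<^sup>2)
          \<and> (p powr (1 / \<gamma>\<^sub>1\<^sup>2) > 1/2 \<longleftrightarrow> \<gamma>\<^sub>1 > sqrt (ln p / ln (1/2))))"
proof (intro conjI ballI)
  fix \<delta> :: real assume "\<delta> \<in> {0<..<1}"
  hence d: "0 < \<delta>" "\<delta> < 1" by auto
  show "let lamd = p powr ((1 - \<delta>\<^sup>2) / \<delta>\<^sup>2) / \<delta>\<^sup>2 in
              lamd \<ge> 0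
            \<and> (\<forall>lam\<ge>0. G \<sigma> p \<delta> lam \<le> G \<sigma> p \<delta> lamd)
            \<and> (SUP lam\<in>{0..}. G \<sigma> p \<delta> lam) = p powr (1 / \<delta>\<^sup>2)
            \<and> G \<sigma> p \<delta> lamd = p powr (1 / \<delta>\<^sup>2)"
    unfolding Let_def using part1[OF assms d] sup_val[OF assms d] by simp
next
  fix g :: real assume "g \<in> {0<..<1}"
  hence g: "0 < g" "g < 1" by auto
  have "(INF \<delta>\<in>{g..<1}. SUP lam\<in>{0..}. G \<sigma> p \<delta> lam) = (INF \<delta>\<in>{g..<1}. p powr (1 / \<delta>\<^sup>2))"
    using sup_val[OF assms] g by (intro INF_cong) auto
  also have "\<dots> = p powr (1 / g\<^sup>2)"
  proof (rule cInf_eq_minimum)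
    show "p powr (1 / g\<^sup>2) \<in> (\<lambda>\<delta>. p powr (1 / \<delta>\<^sup>2)) ` {g..<1}" using g by auto
    fix x assume "x \<in> (\<lambda>\<delta>. p powr (1 / \<delta>\<^sup>2)) ` {g..<1}"
    then obtain \<delta> where x: "x = p powr (1 / \<delta>\<^sup>2)" and dd: "g \<le> \<delta>" by auto
    have "g\<^sup>2 \<le> \<delta>\<^sup>2" using dd g by (simp add: power_mono)
    hence "1 / \<delta>\<^sup>2 \<le> 1 / g\<^sup>2" using g by (simp add: frac_le)
    thus "p powr (1 / g\<^sup>2) \<le> x" unfolding x using assms by (intro powr_mono') auto
  qed
  finally show "(INF \<delta>\<in>{g..<1}. SUP lam\<in>{0..}. G \<sigma> p \<delta> lam) = p powr (1 / g\<^sup>2)" .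
  have l2: "ln (1/2::real) < 0" by simp
  have lp: "ln p < 0" using assms by simp
  have "p powr (1 / g\<^sup>2) > 1/2 \<longleftrightarrow> exp (ln p / g\<^sup>2) > exp (ln (1/2))"
    using assms by (simp add: powr_def)
  also have "\<dots> \<longleftrightarrow> ln p / g\<^sup>2 > ln (1/2)" by (simp only: exp_less_cancel_iff)
  also have "\<dots> \<longleftrightarrow> ln p > ln (1/2) * g\<^sup>2" using g by (simp add: pos_less_divide_eq)
  also have "\<dots> \<longleftrightarrow> ln p / ln (1/2) < g\<^sup>2" using l2 by (simp add: divide_less_eq mult.commute)
  also have "\<dots> \<longleftrightarrow> sqrt (ln p / ln (1/2)) < sqrt (g\<^sup>2)" by (simp only: real_sqrt_less_iff)
  also have "\<dots> \<longleftrightarrow> sqrt (ln p / ln (1/2)) < g" using g by simp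
  finally show "p powr (1 / g\<^sup>2) > 1/2 \<longleftrightarrow> g > sqrt (ln p / ln (1/2))" .
qed

end
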